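(* Let $K$ be a compact convex set with nonempty interior in a two-dimensional real vector space, centrally symmetric with respect to the origin. Then $K$ is an ellipse (i.e. a region bounded by an ellipse centered at the origin) if and only if for all $x,y\in\partial K$ with $x\neq\pm y$, $K$ is invariant under the linear map $T$ defined by $T(x+y)=-x-y$ and $T(y-x)=y-x$. *)

theory Defs
  imports "HOL-Analysis.Analysis"
begin

definition origin_ellipse :: "(real^2) set \<Rightarrow> bool" where
  "origin_ellipse K \<longleftrightarrow> (\<exists>f :: real^2 \<Rightarrow> real^2. linear f \<and> inj f \<and> K = f ` cball 0 1)"

end

theory Submission
  imports Defs
begin

lemma cont_compact_absint:
  fixes f :: "'a::euclidean_space \<Rightarrow> real"
  assumes "compact S" "continuous_on S f" shows "f absolutely_integrable_on S"
proof -
  have m: "(\<lambda>x. indicator S x *\<^sub>R f x) \<in> borel_measurable lborel"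
    using borel_measurable_continuous_on_indicator[OF borel_compact[OF assms(1)] assms(2)] by simp
  show ?thesis
  unfolding set_integrable_def
  using borel_integrable_compact[OF assms] integrable_completion[OF m] by simp
qed

lemma cont_compact_int:
  fixes f :: "'a::euclidean_space \<Rightarrow> real"
  assumes "compact S" "continuous_on S f" shows "f integrable_on S"
  using cont_compact_absint[OF assms] set_lebesgue_integral_eq_integral(1) by blast

lemma cov_real:
  fixes f :: "real^2 \<Rightarrow> real" and g :: "real^2 \<Rightarrow> real^2"
  assumes "linear g" "f absolutely_integrable_on (g ` S)"
  shows "integral (g ` S) f = \<bar>det (matrix g)\<bar> * integral S (f \<circ> g)"
proof -
  let ?F = "\<lambda>x. (vec (f x) :: real^1)"
  have "?F absolutely_integrable_on (g ` S)"
    using assms(2) by (simp add: absolutely_integrable_on_1_iff)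
  then have "integral (g ` S) ?F = \<bar>det (matrix g)\<bar> *\<^sub>R integral S (?F \<circ> g)"
    using integral_change_of_variables_linear[OF assms(1)] by blast
  then have "(integral (g ` S) ?F) $ 1 = (\<bar>det (matrix g)\<bar> *\<^sub>R integral S (?F \<circ> g)) $ 1"
    by simp
  then show ?thesis
    by (simp add: integral_on_1_eq[of "g ` S"] integral_on_1_eq[of S] o_def)
qed

definition det2 :: "real^2 \<Rightarrow> real^2 \<Rightarrow> real" where
  "det2 u v = u$1 * v$2 - u$2 * v$1"

definition Qf :: "(real^2) set \<Rightarrow> real^2 \<Rightarrow> real" where
  "Qf K z = integral K (\<lambda>w. (det2 z w)^2)"

lemma cont_det2: "continuous_on S (\<lambda>w. (det2 z w)^2)"
  unfolding det2_def by (intro continuous_intros)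

lemma det2_linear:
  assumes "linear T"
  shows "det2 (T u) (T v) = det (matrix T) * det2 u v"
proof -
  have "T u = matrix T *v u" "T v = matrix T *v v"
    using assms by (simp_all add: matrix_works)
  then show ?thesis
    by (simp add: det2_def det_2 matrix_vector_mult_def sum_2 algebra_simps)
qed

lemma decomp2:
  assumes "det2 p q \<noteq> 0"
  shows "u = (det2 u q / det2 p q) *\<^sub>R p + (det2 p u / det2 p q) *\<^sub>R q"
proof -
  have "det2 p q *\<^sub>R u = det2 u q *\<^sub>R p + det2 p u *\<^sub>R q"
    by (simp add: vec_eq_iff forall_2 det2_def algebra_simps)
  then have "(1 / det2 p q) *\<^sub>R (det2 p q *\<^sub>R u) = (1 / det2 p q) *\<^sub>R (det2 u q *\<^sub>R p + det2 p u *\<^sub>R q)"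
    by simp
  then show ?thesis using assms by (simp add: scaleR_add_right)
qed

lemma det2_ident: "det2 a b *\<^sub>R c = det2 c b *\<^sub>R a + det2 a c *\<^sub>R b"
  by (simp add: vec_eq_iff forall_2 det2_def algebra_simps)

lemma Qf_scale: "Qf K (t *\<^sub>R z) = t^2 * Qf K z"
proof -
  have "(\<lambda>w. (det2 (t *\<^sub>R z) w)^2) = (\<lambda>w. t^2 * (det2 z w)^2)"
    by (auto simp: det2_def power2_eq_square algebra_simps)
  then show ?thesis unfolding Qf_def by simp
qed

lemma Qf_invariant:
  assumes "compact K" "linear T" "T ` K = K" "\<bar>det (matrix T)\<bar> = 1"
  shows "Qf K (T z) = Qf K z"
proof -
  have ai: "(\<lambda>w. (det2 (T z) w)^2) absolutely_integrable_on (T ` K)"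
    using assms(1,3) by (simp add: cont_compact_absint cont_det2)
  have "Qf K (T z) = integral (T ` K) (\<lambda>w. (det2 (T z) w)^2)"
    using assms(3) by (simp add: Qf_def)
  also have "\<dots> = integral K ((\<lambda>w. (det2 (T z) w)^2) \<circ> T)"
    using cov_real[OF assms(2) ai] assms(4) by simp
  also have "((\<lambda>w. (det2 (T z) w)^2) \<circ> T) = (\<lambda>w. (det2 z w)^2)"
  proof
    fix w
    have "(det (matrix T))^2 = 1" using assms(4)
      by (simp add: abs_square_eq_1)
    then show "((\<lambda>w. (det2 (T z) w)^2) \<circ> T) w = (det2 z w)^2"
      by (simp add: det2_linear[OF assms(2)] power_mult_distrib)
  qed
  finally show ?thesis by (simp add: Qf_def)
qed

lemma Qf_formula:
  assumes "compact K"
  shows "Qf K z = (z$1)^2 * integral K (\<lambda>w. (w$2)^2) - 2 * (z$1 * z$2) * integral K (\<lambda>w. w$1 * w$2)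
     + (z$2)^2 * integral K (\<lambda>w. (w$1)^2)"
proof -
  have i1: "(\<lambda>w. (z$1)^2 * (w$2)^2) integrable_on K"
    and i2: "(\<lambda>w. 2 * (z$1 * z$2) * (w$1 * w$2)) integrable_on K"
    and i3: "(\<lambda>w. (z$2)^2 * (w$1)^2) integrable_on K"
    by (rule cont_compact_int[OF assms], intro continuous_intros)+
  have eq: "(\<lambda>w. (det2 z w)^2) = (\<lambda>w. ((z$1)^2 * (w$2)^2 - 2 * (z$1 * z$2) * (w$1 * w$2)) + (z$2)^2 * (w$1)^2)"
    by (auto simp: det2_def power2_eq_square algebra_simps)
  have "Qf K z = integral K (\<lambda>w. (z$1)^2 * (w$2)^2 - 2 * (z$1 * z$2) * (w$1 * w$2)) + integral K (\<lambda>w. (z$2)^2 * (w$1)^2)"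
    unfolding Qf_def eq by (rule integral_add[OF integrable_diff[OF i1 i2] i3])
  also have "integral K (\<lambda>w. (z$1)^2 * (w$2)^2 - 2 * (z$1 * z$2) * (w$1 * w$2)) = integral K (\<lambda>w. (z$1)^2 * (w$2)^2) - integral K (\<lambda>w. 2 * (z$1 * z$2) * (w$1 * w$2))"
    by (rule integral_diff[OF i1 i2])
  finally show ?thesis by simp
qed

lemma Qf_nonneg:
  assumes "compact K" shows "0 \<le> Qf K z"
  unfolding Qf_def by (rule integral_nonneg[OF cont_compact_int[OF assms cont_det2]]) simp

lemma Qf_pos:
  assumes "compact K" "0 \<in> interior K" "z \<noteq> 0"
  shows "0 < Qf K z"
proof -
  obtain r where r: "r > 0" "ball 0 r \<subseteq> interior K"
    using assms(2) open_contains_ball open_interior by blast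
  define J where "J = (vector [- z$2, z$1] :: real^2)"
  have nz: "0 < (z$1)^2 + (z$2)^2"
    using assms(3) by (simp add: vec_eq_iff forall_2 sum_power2_gt_zero_iff)
  have nJ: "norm J = norm z"
    by (simp add: J_def norm_eq_sqrt_inner inner_vec_def sum_2 power2_eq_square)
  define w0 where "w0 = (r / (2 * norm z)) *\<^sub>R J"
  have "norm w0 = r / 2"
    using assms(3) r(1) by (simp add: w0_def nJ)
  then have "w0 \<in> interior K" using r by auto
  then obtain a b where ab: "cbox a b \<subseteq> interior K" "w0 \<in> box a b"
    using open_contains_cbox[OF open_interior] by metis
  have "det2 z w0 = (r / (2 * norm z)) * ((z$1)^2 + (z$2)^2)"
    by (simp add: det2_def w0_def J_def power2_eq_square algebra_simps)
  moreover have "0 < (r / (2 * norm z)) * ((z$1)^2 + (z$2)^2)"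
    using nz r(1) assms(3) by simp
  ultimately have "0 < det2 z w0"
    by simp
  then have dnz: "(det2 z w0)^2 \<noteq> 0"
    by simp
  have cK: "cbox a b \<subseteq> K" using ab(1) interior_subset by blast
  have ne: "box a b \<noteq> {}" using ab(2) by blast
  have i0: "integral (cbox a b) (\<lambda>w. (det2 z w)^2) \<noteq> 0"
    using integral_cbox_eq_0_iff[OF cont_det2 ne] dnz ab(2) box_subset_cbox by fastforce
  have I0: "0 \<le> integral (cbox a b) (\<lambda>w. (det2 z w)^2)"
    by (rule integral_nonneg[OF integrable_continuous[OF cont_det2]]) simp
  have I1: "integral (cbox a b) (\<lambda>w. (det2 z w)^2) \<le> Qf K z"
    unfolding Qf_def
    by (rule integral_subset_le[OF cK integrable_continuous[OF cont_det2] cont_compact_int[OF assms(1) cont_det2]]) simp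
  show ?thesis using i0 I0 I1 by linarith
qed

lemma Qf_neg: "Qf K (- z) = Qf K z"
  using Qf_scale[of K "-1" z] by simp

lemma reflection_exists:
  assumes "det2 x y \<noteq> 0"
  shows "\<exists>T. linear T \<and> T (x + y) = - x - y \<and> T (y - x) = y - x \<and> T x = - y \<and> \<bar>det (matrix T)\<bar> = 1"
proof -
  define p where "p = x + y"
  define q where "q = y - x"
  define D where "D = det2 p q"
  have D: "D = 2 * det2 x y" by (simp add: D_def p_def q_def det2_def algebra_simps)
  then have Dnz: "D \<noteq> 0" using assms by simp
  define T where "T = (\<lambda>u. (det2 u q / D) *\<^sub>R (- p) + (det2 p u / D) *\<^sub>R q)"
  have lin: "linear T"
    using Dnz by (intro linearI) (simp_all add: T_def vec_eq_iff forall_2 det2_def field_simps)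
  have Tp: "T p = - p" using Dnz by (simp add: T_def D_def det2_def)
  have Tq: "T q = q" using Dnz by (simp add: T_def D_def det2_def)
  have h1: "det2 x q / D = 1/2" using assms by (simp add: D q_def det2_def algebra_simps)
  have "det2 p x = - det2 x y" by (simp add: p_def det2_def algebra_simps)
  then have h2: "det2 p x / D = -1/2" using assms by (simp add: D)
  have Tx: "T x = - y"
    unfolding T_def h1 h2 by (simp add: p_def q_def vec_eq_iff forall_2 algebra_simps)
  have "det2 (T p) (T q) = det (matrix T) * D"
    using det2_linear[OF lin] D_def by simp
  moreover have "det2 (T p) (T q) = - D" by (simp add: Tp Tq D_def det2_def)
  ultimately have "- D = det (matrix T) * D" by simp
  then have "det (matrix T) = -1" using Dnz
    by (metis mult_cancel_right mult_minus1)
  then show ?thesis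
    using lin Tp Tq Tx by (intro exI[of _ T]) (simp add: p_def q_def)
qed

lemma norm2_vec2: "(norm (u::real^2))^2 = (u$1)^2 + (u$2)^2"
  by (simp only: power2_norm_eq_inner) (simp add: inner_vec_def sum_2 power2_eq_square)

lemma ellipse_of_form:
  fixes A B C c :: real
  assumes A: "A > 0" and D: "C - B^2 / A > 0" and c: "c > 0"
    and K: "K = {z. A * (z$1)^2 - 2 * B * (z$1 * z$2) + C * (z$2)^2 \<le> c}"
  shows "origin_ellipse K"
proof -
  define a where "a = sqrt A"
  define e where "e = sqrt (C - B^2 / A)"
  define s where "s = sqrt c"
  have a: "a > 0" "a^2 = A" using A by (auto simp: a_def)
  have e: "e > 0" "e^2 = C - B^2 / A" using D by (auto simp: e_def)
  have s: "s > 0" "s^2 = c" using c by (auto simp: s_def)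
  have Pid: "A * (z$1)^2 - 2 * B * (z$1 * z$2) + C * (z$2)^2 = (a * (z$1 - B / A * z$2))^2 + (e * z$2)^2" for z :: "real^2"
  proof -
    have "(a * (z$1 - B / A * z$2))^2 + (e * z$2)^2 = a^2 * (z$1 - B / A * z$2)^2 + e^2 * (z$2)^2"
      by (simp add: power_mult_distrib)
    also have "\<dots> = A * (z$1 - B / A * z$2)^2 + (C - B^2 / A) * (z$2)^2" by (simp add: a e)
    also have "\<dots> = A * (z$1)^2 - 2 * B * (z$1 * z$2) + C * (z$2)^2"
      using A by (simp add: power2_eq_square field_simps)
    finally show ?thesis by simp
  qed
  define f where "f = (\<lambda>u::real^2. s *\<^sub>R (vector [u$1 / a + B / A * (u$2 / e), u$2 / e] :: real^2))"
  define g where "g = (\<lambda>z::real^2. (1 / s) *\<^sub>R (vector [a * (z$1 - B / A * z$2), e * z$2] :: real^2))"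
  have lin: "linear f"
    by (intro linearI) (simp_all add: f_def vec_eq_iff forall_2 algebra_simps add_divide_distrib)
  have fg: "f (g z) = z" for z
    using a e s A by (simp add: f_def g_def vec_eq_iff forall_2 field_simps)
  have gf: "g (f u) = u" for u
    using a e s A by (simp add: f_def g_def vec_eq_iff forall_2 field_simps)
  have inj: "inj f" by (metis gf injI)
  have Pf: "A * ((f u)$1)^2 - 2 * B * ((f u)$1 * (f u)$2) + C * ((f u)$2)^2 = c * (norm u)^2" for u
  proof -
    have "(a * ((f u)$1 - B / A * (f u)$2)) = s * u$1" "e * (f u)$2 = s * u$2"
      using a e s A by (simp_all add: f_def field_simps)
    then show ?thesis unfolding Pid norm2_vec2 using s
      by (simp add: power_mult_distrib algebra_simps)
  qed
  have "K = f ` cball 0 1"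
  proof
    show "f ` cball 0 1 \<subseteq> K"
    proof
      fix z assume "z \<in> f ` cball 0 1"
      then obtain u where u: "norm u \<le> 1" "z = f u" by auto
      have "(norm u)^2 \<le> 1" using u(1) by (simp add: power_le_one)
      then show "z \<in> K" using Pf[of u] u(2) c K by (simp add: mult_le_cancel_left1)
    qed
  next
    show "K \<subseteq> f ` cball 0 1"
    proof
      fix z assume "z \<in> K"
      then have "c * (norm (g z))^2 \<le> c" using Pf[of "g z"] fg[of z] K by simp
      then have "(norm (g z))^2 \<le> 1" using c by (simp add: mult_le_cancel_left1)
      then have "norm (g z) \<le> 1" by (simp add: power_le_one_iff)
      then show "z \<in> f ` cball 0 1" using fg[of z] by (metis image_eqI mem_cball_0)
    qed
  qed
  then show ?thesis unfolding origin_ellipse_def using lin inj by blast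
qed

lemma zero_interior:
  fixes K :: "(real^2) set"
  assumes "convex K" "interior K \<noteq> {}" "\<And>x. x \<in> K \<Longrightarrow> - x \<in> K"
  shows "0 \<in> interior K"
proof -
  obtain p where p: "p \<in> interior K" using assms(2) by blast
  have "uminus ` K = K"
    using assms(3) by (auto simp: image_iff) (metis minus_minus)
  then have "interior K = uminus ` interior K" by (metis interior_negations)
  then have "- p \<in> interior K" using p by auto
  then have "(1/2) *\<^sub>R p + (1/2) *\<^sub>R (- p) \<in> interior K"
    using convexD[OF convex_interior[OF assms(1)] p, of "- p" "1/2" "1/2"] by auto
  then show ?thesis by simp
qed

lemma radial_ge1:
  fixes K :: "(real^2) set"
  assumes "convex K" "0 \<in> interior K" "z \<in> K" "z \<noteq> 0" "d > 0" "d *\<^sub>R z \<in> frontier K"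
  shows "d \<ge> 1"
proof (rule ccontr)
  assume "\<not> d \<ge> 1"
  then have d1: "d < 1" by simp
  have "open_segment 0 z \<subseteq> interior K"
    using in_interior_closure_convex_segment[OF assms(1,2)] assms(3) closure_subset by blast
  moreover have "d *\<^sub>R z \<in> open_segment 0 z"
    using assms(4,5) d1 by (auto simp: in_segment intro!: exI[of _ d])
  ultimately have "d *\<^sub>R z \<in> interior K" by blast
  then show False using assms(6) by (simp add: frontier_def)
qed

lemma backward:
  fixes K :: "(real^2) set"
  assumes cK: "compact K" and cvK: "convex K" and iK: "interior K \<noteq> {}"
    and sym: "\<And>x. x \<in> K \<Longrightarrow> - x \<in> K"
    and H: "\<forall>x\<in>frontier K. \<forall>y\<in>frontier K. x \<noteq> y \<and> x \<noteq> - y \<longrightarrow>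
       (\<forall>T :: real^2 \<Rightarrow> real^2. linear T \<and> T (x + y) = - x - y \<and> T (y - x) = y - x
          \<longrightarrow> T ` K = K)"
  shows "origin_ellipse K"
proof -
  have z0: "0 \<in> interior K" using zero_interior[OF cvK iK sym] .
  have bdd: "bounded K" using cK compact_imp_bounded by blast
  have fK: "frontier K \<subseteq> K" using cK compact_imp_closed frontier_subset_closed by blast
  have fnz: "x \<noteq> 0" if "x \<in> frontier K" for x
    using that z0 by (auto simp: frontier_def)
  have key: "Qf K x = Qf K y" if x: "x \<in> frontier K" and y: "y \<in> frontier K" and d: "det2 x y \<noteq> 0" for x y
  proof -
    obtain T where T: "linear T" "T (x + y) = - x - y" "T (y - x) = y - x" "T x = - y" "\<bar>det (matrix T)\<bar> = 1"
      using reflection_exists[OF d] by blast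
    have "x \<noteq> y" "x \<noteq> - y" using d by (auto simp: det2_def)
    then have "T ` K = K" using H x y T(1-3) by blast
    then have "Qf K (T x) = Qf K x" using Qf_invariant[OF cK T(1) _ T(5)] by blast
    then show ?thesis using T(4) Qf_neg by metis
  qed
  have a1: "axis 1 (1::real) \<noteq> (0::real^2)" by (simp add: axis_eq_0_iff)
  obtain d0 where d0: "0 < d0" "0 + d0 *\<^sub>R axis 1 1 \<in> frontier K"
    using ray_to_frontier[OF bdd z0 a1] by blast
  define x0 where "x0 = d0 *\<^sub>R (axis 1 1 :: real^2)"
  have x0: "x0 \<in> frontier K" using d0 by (simp add: x0_def)
  then have x0nz: "x0 \<noteq> 0" using fnz by blast
  define J where "J = (vector [- x0$2, x0$1] :: real^2)"
  have Jnz: "J \<noteq> 0" using x0nz by (auto simp: J_def vec_eq_iff forall_2)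
  obtain d1 where d1: "0 < d1" "0 + d1 *\<^sub>R J \<in> frontier K"
    using ray_to_frontier[OF bdd z0 Jnz] by blast
  define x1 where "x1 = d1 *\<^sub>R J"
  have x1: "x1 \<in> frontier K" using d1 by (simp add: x1_def)
  have "0 < (x0$1)^2 + (x0$2)^2"
    using x0nz by (simp add: vec_eq_iff forall_2 sum_power2_gt_zero_iff)
  moreover have "det2 x0 x1 = d1 * ((x0$1)^2 + (x0$2)^2)"
    by (simp add: det2_def x1_def J_def power2_eq_square algebra_simps)
  ultimately have "0 < det2 x0 x1" using d1(1) by (simp only: mult_pos_pos)
  then have d01: "det2 x0 x1 \<noteq> 0" by simp
  define c where "c = Qf K x0"
  have c: "c > 0" unfolding c_def using Qf_pos[OF cK z0 x0nz] .
  have allc: "Qf K y = c" if y: "y \<in> frontier K" for y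
  proof (cases "det2 x0 y = 0")
    case False then show ?thesis using key[OF x0 y] c_def by simp
  next
    case True
    have "det2 x1 y \<noteq> 0"
    proof
      assume "det2 x1 y = 0"
      then have "det2 y x1 = 0" by (simp add: det2_def algebra_simps)
      then have "det2 x0 x1 *\<^sub>R y = 0" using det2_ident[of x0 x1 y] True by simp
      then show False using d01 fnz[OF y] by simp
    qed
    then show ?thesis using key[OF x1 y] key[OF x0 x1 d01] c_def by simp
  qed
  have Q0: "Qf K 0 = 0" using Qf_scale[of K 0 0] by simp
  have Kset: "K = {z. Qf K z \<le> c}"
  proof
    show "K \<subseteq> {z. Qf K z \<le> c}"
    proof
      fix z assume zK: "z \<in> K"
      show "z \<in> {z. Qf K z \<le> c}"
      proof (cases "z = 0")
        case True then show ?thesis using Q0 c by simp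
      next
        case False
        obtain d where d: "0 < d" "0 + d *\<^sub>R z \<in> frontier K"
          using ray_to_frontier[OF bdd z0 False] by blast
        have "d \<ge> 1" using radial_ge1[OF cvK z0 zK False d(1)] d(2) by simp
        then have "1 \<le> d^2" by (simp add: one_le_power)
        moreover have "d^2 * Qf K z = c" using allc[of "d *\<^sub>R z"] d(2) Qf_scale[of K d z] by simp
        moreover have "0 \<le> Qf K z" using Qf_nonneg[OF cK] .
        ultimately have "Qf K z \<le> c"
          by (metis mult_le_cancel_right1 mult.commute order_trans dual_order.refl mult_right_mono mult_1)
        then show ?thesis by simp
      qed
    qed
  next
    show "{z. Qf K z \<le> c} \<subseteq> K"
    proof
      fix z assume "z \<in> {z. Qf K z \<le> c}"
      then have zc: "Qf K z \<le> c" by simp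
      show "z \<in> K"
      proof (cases "z = 0")
        case True then show ?thesis using z0 interior_subset by blast
      next
        case False
        obtain d where d: "0 < d" "0 + d *\<^sub>R z \<in> frontier K"
          using ray_to_frontier[OF bdd z0 False] by blast
        have dc: "d^2 * Qf K z = c" using allc[of "d *\<^sub>R z"] d(2) Qf_scale[of K d z] by simp
        have qp: "0 < Qf K z" using Qf_pos[OF cK z0 False] .
        have "1 \<le> d^2"
        proof (rule ccontr)
          assume "\<not> 1 \<le> d^2"
          then have "d^2 * Qf K z < Qf K z" using qp by simp
          then show False using dc zc by simp
        qed
        then have d1: "1 \<le> d" using d(1) power2_le_imp_le[of 1 d] by simp
        have dzK: "d *\<^sub>R z \<in> K" using d(2) fK by auto
        have zK0: "0 \<in> K" using z0 interior_subset by blast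
        have "(1 / d) *\<^sub>R (d *\<^sub>R z) + (1 - 1 / d) *\<^sub>R 0 \<in> K"
          using convexD[OF cvK dzK zK0, of "1/d" "1 - 1/d"] d1 d(1) by simp
        then show ?thesis using d(1) by simp
      qed
    qed
  qed
  define A where "A = integral K (\<lambda>w. (w$2)^2)"
  define B where "B = integral K (\<lambda>w. w$1 * w$2)"
  define C where "C = integral K (\<lambda>w. (w$1)^2)"
  have QF: "Qf K z = A * (z$1)^2 - 2 * B * (z$1 * z$2) + C * (z$2)^2" for z
    using Qf_formula[OF cK, of z] by (simp add: A_def B_def C_def algebra_simps)
  have Apos: "A > 0"
    using Qf_pos[OF cK z0 a1] QF[of "axis 1 1"] by (simp add: axis_def)
  have "0 < Qf K (vector [B / A, 1])"
    using Qf_pos[OF cK z0] by (simp add: vec_eq_iff forall_2)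
  then have Dpos: "C - B^2 / A > 0"
    using QF[of "vector [B / A, 1]"] Apos by (simp add: power2_eq_square field_simps)
  show ?thesis
    by (rule ellipse_of_form[OF Apos Dpos c]) (use Kset QF in auto)
qed

lemma lagrange2: "(det2 p q)^2 + (p \<bullet> q)^2 = (norm p)^2 * (norm q)^2"
  unfolding norm2_vec2 by (simp add: det2_def inner_vec_def sum_2 power2_eq_square algebra_simps)

lemma forward:
  fixes K :: "(real^2) set"
  assumes "origin_ellipse K"
  shows "\<forall>x\<in>frontier K. \<forall>y\<in>frontier K. x \<noteq> y \<and> x \<noteq> - y \<longrightarrow>
       (\<forall>T :: real^2 \<Rightarrow> real^2. linear T \<and> T (x + y) = - x - y \<and> T (y - x) = y - x
          \<longrightarrow> T ` K = K)"
proof (intro ballI impI allI)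
  obtain f :: "real^2 \<Rightarrow> real^2" where f: "linear f" "inj f" "K = f ` cball 0 1"
    using assms unfolding origin_ellipse_def by blast
  have intK: "interior K = f ` ball 0 1"
    using f interior_injective_linear_image[OF f(1,2), of "cball 0 1"] by simp
  have "compact K" unfolding f(3)
    by (rule compact_continuous_image[OF linear_continuous_on compact_cball])
       (use f(1) linear_conv_bounded_linear in blast)
  then have clK: "closed K" by (rule compact_imp_closed)
  have unit: "\<exists>a. norm a = 1 \<and> x = f a" if "x \<in> frontier K" for x
  proof -
    have "x \<in> K" using that clK frontier_subset_closed by blast
    then obtain a where a: "norm a \<le> 1" "x = f a" using f(3) by auto
    have "x \<notin> interior K" using that by (simp add: frontier_def)
    then have "norm a \<ge> 1" using a intK by auto
    then show ?thesis using a by auto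
  qed
  fix x y and T :: "real^2 \<Rightarrow> real^2"
  assume x: "x \<in> frontier K" and y: "y \<in> frontier K" and xy: "x \<noteq> y \<and> x \<noteq> - y"
    and T: "linear T \<and> T (x + y) = - x - y \<and> T (y - x) = y - x"
  obtain a where a: "norm a = 1" "x = f a" using unit[OF x] by blast
  obtain b where b: "norm b = 1" "y = f b" using unit[OF y] by blast
  have ab: "a \<noteq> b" "a \<noteq> - b" using xy a b f(1) by (auto simp: linear_neg)
  define p where "p = a + b"
  define q where "q = b - a"
  have pnz: "p \<noteq> 0" using ab(2) by (auto simp: p_def add_eq_0_iff)
  have qnz: "q \<noteq> 0" using ab(1) by (auto simp: q_def)
  have pq: "p \<bullet> q = 0"
  proof -
    have "p \<bullet> q = b \<bullet> b - a \<bullet> a" by (simp add: p_def q_def algebra_simps inner_commute)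
    also have "\<dots> = 0" using a(1) b(1) by (simp add: dot_square_norm)
    finally show ?thesis .
  qed
  have "(det2 p q)^2 = (norm p)^2 * (norm q)^2" using lagrange2[of p q] pq by simp
  then have dpq: "det2 p q \<noteq> 0" using pnz qnz by auto
  have ppos: "p \<bullet> p \<noteq> 0" using pnz by simp
  define S where "S = (\<lambda>u. u - (2 * (u \<bullet> p) / (p \<bullet> p)) *\<^sub>R p)"
  have Sp: "S p = - p" using ppos by (simp add: S_def scaleR_2)
  have Sq: "S q = q" using pq by (simp add: S_def inner_commute)
  have linS: "linear S"
    by (intro linearI) (simp_all add: S_def inner_add_left algebra_simps add_divide_distrib)
  have SS: "S (S u) = u" for u
    using ppos by (simp add: S_def inner_diff_left algebra_simps)
  have nS: "norm (S u) = norm u" for u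
  proof -
    define c where "c = 2 * (u \<bullet> p) / (p \<bullet> p)"
    have Su: "S u = u - c *\<^sub>R p" by (simp add: S_def c_def)
    have "(norm (S u))^2 = (S u) \<bullet> (S u)" by (rule power2_norm_eq_inner)
    also have "\<dots> = u \<bullet> u - 2 * c * (u \<bullet> p) + c * c * (p \<bullet> p)"
      unfolding Su by (simp add: inner_diff_left inner_diff_right inner_commute algebra_simps)
    also have "c * c * (p \<bullet> p) = 2 * c * (u \<bullet> p)" using ppos by (simp add: c_def)
    also have "u \<bullet> u - 2 * c * (u \<bullet> p) + 2 * c * (u \<bullet> p) = (norm u)^2"
      by (simp add: power2_norm_eq_inner)
    finally have "(norm (S u))^2 = (norm u)^2" .
    then show ?thesis by (simp add: power2_eq_iff_nonneg)
  qed
  have TfS: "T (f u) = f (S u)" for u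
  proof -
    define al where "al = det2 u q / det2 p q"
    define be where "be = det2 p u / det2 p q"
    have u: "u = al *\<^sub>R p + be *\<^sub>R q" unfolding al_def be_def by (rule decomp2[OF dpq])
    have fp: "f p = x + y" using a b f(1) by (simp add: p_def linear_add)
    have fq: "f q = y - x" using a b f(1) by (simp add: q_def linear_diff)
    have lTf: "linear (T \<circ> f)" using T f(1) linear_compose by blast
    have lfS: "linear (f \<circ> S)" using linS f(1) linear_compose by blast
    have "T (f u) = (T \<circ> f) (al *\<^sub>R p + be *\<^sub>R q)" using u by simp
    also have "\<dots> = al *\<^sub>R (T \<circ> f) p + be *\<^sub>R (T \<circ> f) q"
      by (simp only: linear_add[OF lTf] linear_scale[OF lTf])
    also have "\<dots> = al *\<^sub>R (f \<circ> S) p + be *\<^sub>R (f \<circ> S) q"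
      using T fp fq Sp Sq f(1) by (simp add: linear_neg)
    also have "\<dots> = (f \<circ> S) (al *\<^sub>R p + be *\<^sub>R q)"
      by (simp only: linear_add[OF lfS] linear_scale[OF lfS])
    also have "\<dots> = f (S u)" using u by simp
    finally show ?thesis .
  qed
  have Scb: "S ` cball 0 1 = cball 0 1"
  proof
    show "S ` cball 0 1 \<subseteq> cball 0 1" using nS by auto
    show "cball 0 1 \<subseteq> S ` cball 0 1"
    proof
      fix u :: "real^2" assume "u \<in> cball 0 1"
      then show "u \<in> S ` cball 0 1" using nS SS by (metis image_eqI mem_cball_0)
    qed
  qed
  have "T ` K = f ` (S ` cball 0 1)"
    unfolding f(3) image_image TfS by simp
  then show "T ` K = K" using Scb f(3) by simp
qed

theorem corollary3p1:
  fixes K :: "(real^2) set"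
  assumes "compact K" and "convex K" and "interior K \<noteq> {}"
    and "\<And>x. x \<in> K \<Longrightarrow> - x \<in> K"
  shows "origin_ellipse K \<longleftrightarrow>
    (\<forall>x\<in>frontier K. \<forall>y\<in>frontier K. x \<noteq> y \<and> x \<noteq> - y \<longrightarrow>
       (\<forall>T :: real^2 \<Rightarrow> real^2. linear T \<and> T (x + y) = - x - y \<and> T (y - x) = y - x
          \<longrightarrow> T ` K = K))"
  using forward backward[OF assms] by blast

end
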